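(* If $v_0=v^*$, then $$\eta\sum_{i=1}^n\langle\phi(x_i),P\widehat v_{i-1}\rangle^2\le 100\cdot\alpha^2\cdot\log^2 n\cdot\log\|v_n\|_2.$$
   Context: Setting: $\phi(x_1),\dots,\phi(x_n)\in\mathbb{R}^d$ are feature vectors of samples $x_1,\dots,x_n$; $\eta\in(0,0.1)$; $\beta\ge\alpha>0$; $v^*\in\mathbb{R}^d$ satisfies $\|v^*\|_2=1$, $\eta\sum_{i=1}^n\langle v^*,\phi(x_i)\rangle^2=\beta$, and $\eta\sum_{i=1}^n\langle w,\phi(x_i)\rangle^2\le\alpha$ for every $w$ with $\|w\|_2\le1$ and $\langle w,v^*\rangle=0$. $P=I-v^*(v^* )^\top$. The iterates are $v_i=v_{i-1}+\eta\langle\phi(x_i),v_{i-1}\rangle\phi(x_i)$ for $i\in[n]$, and $\widehat v_i=v_i/\|v_i\|_2$. *)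

theory Defs
  imports "HOL-Analysis.Analysis"
begin

text \<open>Oja-type iterates: v_0 given, v_i = v_{i-1} + eta <phi(x_i), v_{i-1}> phi(x_i).
  Feature vectors phi(x_i) are given as phi i for i = 1..n.\<close>
fun oja_iter :: "real \<Rightarrow> (nat \<Rightarrow> 'a::real_inner) \<Rightarrow> 'a \<Rightarrow> nat \<Rightarrow> 'a" where
  "oja_iter eta phi v0 0 = v0"
| "oja_iter eta phi v0 (Suc i) =
     oja_iter eta phi v0 i + (eta * (phi (Suc i) \<bullet> oja_iter eta phi v0 i)) *\<^sub>R phi (Suc i)"

definition perp_proj :: "'a::real_inner \<Rightarrow> 'a \<Rightarrow> 'a" where
  "perp_proj vs x = x - (vs \<bullet> x) *\<^sub>R vs"

end

theory Submission
  imports Defs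
begin

lemma perp_add: "perp_proj vs (x + y) = perp_proj vs x + perp_proj vs y"
  by (simp add: perp_proj_def inner_add_right algebra_simps scaleR_add_left)
lemma perp_scale: "perp_proj vs (c *\<^sub>R x) = c *\<^sub>R perp_proj vs x"
  by (simp add: perp_proj_def algebra_simps)
lemma perp_orth: "norm vs = 1 \<Longrightarrow> perp_proj vs x \<bullet> vs = 0"
proof -
  assume "norm vs = 1"
  hence "vs \<bullet> vs = 1" by (simp add: norm_eq_1)
  have "perp_proj vs x \<bullet> vs = x \<bullet> vs - (vs \<bullet> x) * (vs \<bullet> vs)"
    by (simp add: perp_proj_def inner_diff_left)
  thus ?thesis using \<open>vs \<bullet> vs = 1\<close> by (simp add: inner_commute)
qed
lemma perp_self: "norm vs = 1 \<Longrightarrow> perp_proj vs vs = 0"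
  by (simp add: perp_proj_def dot_square_norm)
lemma perp_inner: "w \<bullet> vs = 0 \<Longrightarrow> w \<bullet> perp_proj vs x = w \<bullet> x"
  by (simp add: perp_proj_def inner_diff_right)

lemma sum_cs_card: fixes X :: "nat \<Rightarrow> real"
  shows "(\<Sum>l<L. X l)^2 \<le> real L * (\<Sum>l<L. (X l)^2)"
  using Cauchy_Schwarz_ineq_sum[of "\<lambda>_. 1" X "{..<L}"] by simp

definition lv :: "nat \<Rightarrow> nat \<Rightarrow> nat \<Rightarrow> bool" where
  "lv l i j \<longleftrightarrow> i div 2^l = j div 2^l + 1 \<and> even (j div 2^l)"

lemma div_agree_up: fixes i j :: nat
  assumes "i div 2^m = j div 2^m" "m \<le> m'" shows "i div 2^m' = j div 2^m'"
proof -
  obtain d where d: "m' = m + d" using assms(2) le_Suc_ex by blast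
  have "i div 2^m' = i div 2^m div 2^d" by (simp add: d power_add div_mult2_eq)
  also have "\<dots> = j div 2^m div 2^d" using assms(1) by simp
  also have "\<dots> = j div 2^m'" by (simp add: d power_add div_mult2_eq)
  finally show ?thesis .
qed

lemma div_Suc_pow: fixes i :: nat shows "i div 2^(Suc l) = i div 2^l div 2"
  unfolding power_Suc2 by (rule div_mult2_eq)

lemma lv_props: assumes "lv l i j"
  shows "i div 2^(Suc l) = j div 2^(Suc l)" "i div 2^l \<noteq> j div 2^l"
proof -
  from assms have a: "i div 2^l = j div 2^l + 1" and b: "even (j div 2^l)" by (auto simp: lv_def)
  show "i div 2^(Suc l) = j div 2^(Suc l)" unfolding div_Suc_pow a using b by auto
  show "i div 2^l \<noteq> j div 2^l" using a by simp
qed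

lemma lv_unique: assumes "lv l1 i j" "lv l2 i j" shows "l1 = l2"
proof (rule ccontr)
  assume "l1 \<noteq> l2"
  then consider "l1 < l2" | "l2 < l1" by linarith
  then show False
  proof cases
    case 1
    have "i div 2^l2 = j div 2^l2" using div_agree_up[OF lv_props(1)[OF assms(1)]] 1 by simp
    thus False using lv_props(2)[OF assms(2)] by simp
  next
    case 2
    have "i div 2^l1 = j div 2^l1" using div_agree_up[OF lv_props(1)[OF assms(2)]] 2 by simp
    thus False using lv_props(2)[OF assms(1)] by simp
  qed
qed

lemma lv_exists: fixes i j L :: nat assumes "j < i" "i < 2^L" shows "\<exists>l<L. lv l i j"
proof -
  define P where "P m \<longleftrightarrow> i div 2^m = j div 2^m" for m
  have PL: "P L" using assms by (simp add: P_def)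
  define m where "m = (LEAST m. P m)"
  have Pm: "P m" unfolding m_def by (rule LeastI[of P L, OF PL])
  have mL: "m \<le> L" unfolding m_def by (rule Least_le[of P L, OF PL])
  have m0: "m \<noteq> 0"
  proof
    assume "m = 0"
    with Pm have "i = j" by (simp add: P_def)
    with assms(1) show False by simp
  qed
  define l where "l = m - 1"
  have ml: "m = Suc l" using m0 by (simp add: l_def)
  have nP: "\<not> P l" using not_less_Least[of l P] ml m_def by simp
  define q where "q = i div 2^m"
  have qi: "i div 2^l div 2 = q" unfolding q_def ml div_Suc_pow by (rule refl)
  have qj: "j div 2^l div 2 = q" using Pm unfolding q_def P_def ml div_Suc_pow by (rule sym)
  have le: "j div 2^l \<le> i div 2^l" using assms(1) by (simp add: div_le_mono)
  have ne: "j div 2^l \<noteq> i div 2^l" using nP by (simp add: P_def)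
  have "i div 2^l = 2*q \<or> i div 2^l = 2*q+1" using qi by auto
  moreover have "j div 2^l = 2*q \<or> j div 2^l = 2*q+1" using qj by auto
  ultimately have "j div 2^l = 2*q \<and> i div 2^l = 2*q+1" using le ne by auto
  hence "lv l i j" by (simp add: lv_def)
  moreover have "l < L" using mL ml by simp
  ultimately show ?thesis by blast
qed

lemma lv_sum: fixes x :: real assumes "j < i" "i < 2^L"
  shows "(\<Sum>l<L. if lv l i j then x else 0) = x"
proof -
  obtain l0 where l0: "l0 < L" "lv l0 i j" using lv_exists[OF assms] by blast
  have "(\<Sum>l<L. if lv l i j then x else 0) = (\<Sum>l<L. if l = l0 then x else 0)"
    by (rule sum.cong) (use l0 lv_unique in auto)
  also have "\<dots> = x" using l0 by simp
  finally show ?thesis .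
qed

lemma level_split: fixes F :: "nat \<Rightarrow> real" assumes "i < 2^L"
  shows "(\<Sum>j\<in>{1..<i}. F j) = (\<Sum>l<L. \<Sum>j\<in>{1..<i}. if lv l i j then F j else 0)"
proof -
  have "(\<Sum>l<L. \<Sum>j\<in>{1..<i}. if lv l i j then F j else 0) = (\<Sum>j\<in>{1..<i}. \<Sum>l<L. if lv l i j then F j else 0)"
    by (rule sum.swap)
  also have "\<dots> = (\<Sum>j\<in>{1..<i}. F j)"
    by (rule sum.cong) (use assms lv_sum in auto)
  finally show ?thesis by simp
qed

locale oja_setup =
  fixes eta :: real and phi :: "nat \<Rightarrow> 'a::euclidean_space" and vs :: 'a and n :: nat and alpha :: real
  assumes eta_pos: "0 < eta" and vs_norm: "norm vs = 1" and alpha_pos: "0 < alpha"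
  and perp: "\<And>w. norm w \<le> 1 \<Longrightarrow> w \<bullet> vs = 0 \<Longrightarrow> eta * (\<Sum>i=1..n. (w \<bullet> phi i)^2) \<le> alpha"
begin

definition v where "v k = oja_iter eta phi vs k"
definition g where "g k = norm (v k)"
definition c where "c j = phi j \<bullet> v (j-1)"
definition z where "z j = perp_proj vs (phi j)"
definition lam where "lam j = ln (g j) - ln (g (j-1))"

lemma v_Suc: "v (Suc k) = v k + (eta * (phi (Suc k) \<bullet> v k)) *\<^sub>R phi (Suc k)"
  by (simp add: v_def)
lemma v_0: "v 0 = vs" by (simp add: v_def)

lemma g_Suc_sq: "(g (Suc k))^2 = (g k)^2 + 2 * eta * (c (Suc k))^2 + eta^2 * (c (Suc k))^2 * (norm (phi (Suc k)))^2"
  unfolding g_def c_def v_Suc power2_norm_eq_inner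
  by (simp add: inner_add_left inner_add_right inner_commute algebra_simps power2_eq_square)

lemma g_le_Suc: "g k \<le> g (Suc k)"
proof -
  have "(g k)^2 \<le> (g (Suc k))^2" using g_Suc_sq[of k] eta_pos by (simp add: add_nonneg_nonneg)
  thus ?thesis by (simp add: g_def power2_le_iff_abs_le)
qed

lemma g_mono: "k \<le> m \<Longrightarrow> g k \<le> g m"
  using g_le_Suc by (rule lift_Suc_mono_le)

lemma g_ge1: "1 \<le> g k"
  using g_mono[of 0 k] by (simp add: g_def v_0 vs_norm)

lemma g_pos: "0 < g k" using g_ge1[of k] by simp

lemma lam_bound: "eta * (c (Suc k))^2 / (g (Suc k))^2 \<le> lam (Suc k)"
proof -
  define G where "G = g k"
  define G' where "G' = g (Suc k)"
  define u where "u = eta * (c (Suc k))^2 / G^2"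
  have G1: "1 \<le> G" using g_ge1 by (simp add: G_def)
  have u0: "0 \<le> u" unfolding u_def using eta_pos by simp
  have cs: "(c (Suc k))^2 \<le> (norm (phi (Suc k)))^2 * G^2"
  proof -
    have "\<bar>c (Suc k)\<bar> \<le> norm (phi (Suc k)) * G"
      unfolding c_def G_def g_def using Cauchy_Schwarz_ineq2 by simp
    hence "\<bar>c (Suc k)\<bar>^2 \<le> (norm (phi (Suc k)) * G)^2"
      by (intro power_mono) auto
    thus ?thesis by (simp add: power_mult_distrib)
  qed
  have "(G * (1 + u))^2 = G^2 + 2 * eta * (c (Suc k))^2 + eta^2 * (c (Suc k))^2 * ((c (Suc k))^2 / G^2)"
    using G1 unfolding u_def by (simp add: field_simps power2_eq_square)
  also have "\<dots> \<le> G^2 + 2 * eta * (c (Suc k))^2 + eta^2 * (c (Suc k))^2 * (norm (phi (Suc k)))^2"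
    using cs G1 eta_pos by (intro add_left_mono mult_left_mono) (auto simp: divide_le_eq)
  also have "\<dots> = G'^2" using g_Suc_sq[of k] by (simp add: G_def G'_def)
  finally have sq: "(G * (1 + u))^2 \<le> G'^2" .
  have G'pos: "0 < G'" using g_pos by (simp add: G'_def)
  have le: "G * (1 + u) \<le> G'"
    using sq G'pos by (simp add: power2_le_iff_abs_le)
  have "eta * (c (Suc k))^2 / G'^2 = u * (G^2 / G'^2)"
    using G1 unfolding u_def by (simp add: field_simps)
  also have "\<dots> \<le> u * (1 / (1 + u)^2)"
  proof (intro mult_left_mono u0)
    have "(G * (1 + u))^2 \<le> G'^2" by fact
    hence "G^2 * (1+u)^2 \<le> G'^2" by (simp add: power_mult_distrib)
    thus "G^2 / G'^2 \<le> 1 / (1 + u)^2" using G'pos u0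
      by (simp add: field_simps)
  qed
  also have "\<dots> \<le> u / (1 + u)"
  proof -
    have "1 + u \<le> (1 + u)^2" using u0 by (simp add: power2_eq_square algebra_simps)
    hence "u / (1+u)^2 \<le> u / (1 + u)" using u0 by (intro divide_left_mono) auto
    thus ?thesis by simp
  qed
  also have "\<dots> \<le> ln (1 + u)"
  proof -
    have "ln (1 / (1 + u)) \<le> 1 / (1 + u) - 1" using u0 by (intro ln_le_minus_one) simp
    hence "- ln (1 + u) \<le> 1 / (1+u) - 1" using u0 by (simp add: ln_div)
    thus ?thesis using u0 by (simp add: field_simps)
  qed
  also have "\<dots> \<le> ln (G' / G)"
    using le G1 u0 G'pos by (subst ln_le_cancel_iff) (auto simp: field_simps)
  also have "\<dots> = lam (Suc k)"
    using G1 G'pos by (simp add: lam_def G_def G'_def ln_div)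
  finally show ?thesis by (simp add: G'_def)
qed

lemma lam_nonneg: "0 \<le> lam j"
  unfolding lam_def using g_mono[of "j-1" j] g_pos by simp

lemma lam_sum: "(\<Sum>j=1..m. lam j) = ln (g m)"
proof (induction m)
  case 0 then show ?case by (simp add: g_def v_0 vs_norm)
next
  case (Suc m) then show ?case by (simp add: lam_def)
qed

lemma perp_gen: assumes "w \<bullet> vs = 0" shows "eta * (\<Sum>i=1..n. (w \<bullet> phi i)^2) \<le> alpha * (norm w)^2"
proof (cases "w = 0")
  case True then show ?thesis by simp
next
  case False
  define w' where "w' = w /\<^sub>R norm w"
  have nw: "0 < norm w" using False by simp
  have "eta * (\<Sum>i=1..n. (w' \<bullet> phi i)^2) \<le> alpha"
  proof (rule perp)
    show "norm w' \<le> 1" using nw by (simp add: w'_def)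
    show "w' \<bullet> vs = 0" using assms by (simp add: w'_def)
  qed
  moreover have "(\<Sum>i=1..n. (w' \<bullet> phi i)^2) = (\<Sum>i=1..n. (w \<bullet> phi i)^2) / (norm w)^2"
    by (simp add: w'_def sum_divide_distrib power_divide power_mult_distrib divide_inverse mult.commute power_inverse sum_distrib_left)
  ultimately have "eta * (\<Sum>i=1..n. (w \<bullet> phi i)^2) / (norm w)^2 \<le> alpha" by simp
  thus ?thesis using nw by (simp add: divide_le_eq mult.commute)
qed

lemma perp_sub: assumes "w \<bullet> vs = 0" "B \<subseteq> {1..n}"
  shows "eta * (\<Sum>i\<in>B. (w \<bullet> phi i)^2) \<le> alpha * (norm w)^2"
proof -
  have "(\<Sum>i\<in>B. (w \<bullet> phi i)^2) \<le> (\<Sum>i=1..n. (w \<bullet> phi i)^2)"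
    using assms(2) by (intro sum_mono2) auto
  hence "eta * (\<Sum>i\<in>B. (w \<bullet> phi i)^2) \<le> eta * (\<Sum>i=1..n. (w \<bullet> phi i)^2)"
    using eta_pos by simp
  thus ?thesis using perp_gen[OF assms(1)] by linarith
qed

lemma p_sum: "perp_proj vs (v k) = (\<Sum>j=1..k. (eta * c j) *\<^sub>R z j)"
proof (induction k)
  case 0 then show ?case by (simp add: v_0 perp_self vs_norm)
next
  case (Suc k)
  have "perp_proj vs (v (Suc k)) = perp_proj vs (v k) + (eta * c (Suc k)) *\<^sub>R z (Suc k)"
    by (simp add: v_Suc perp_add perp_scale c_def z_def)
  then show ?case using Suc by simp
qed

lemma term_eq: "phi i \<bullet> perp_proj vs (v (i - 1) /\<^sub>R g (i - 1))
   = (\<Sum>j\<in>{1..<i}. eta * c j * (phi i \<bullet> z j)) / g (i - 1)"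
proof -
  have e: "{1..i-1} = {1..<i}" by auto
  have "phi i \<bullet> perp_proj vs (v (i - 1) /\<^sub>R g (i - 1)) = (phi i \<bullet> perp_proj vs (v (i - 1))) / g (i-1)"
    by (simp add: perp_scale divide_inverse mult.commute)
  also have "phi i \<bullet> perp_proj vs (v (i - 1)) = (\<Sum>j\<in>{1..<i}. eta * c j * (phi i \<bullet> z j))"
    unfolding p_sum e by (simp add: inner_sum_right)
  finally show ?thesis .
qed

definition Y where "Y A = (\<Sum>j\<in>A. (eta * c j) *\<^sub>R z j)"

lemma Y_orth: "Y A \<bullet> vs = 0"
  by (simp add: Y_def inner_sum_left z_def perp_orth vs_norm)

lemma Y_bound: assumes "A \<subseteq> {1..n}"
  shows "(norm (Y A))^2 \<le> alpha * (\<Sum>j\<in>A. eta * (c j)^2)"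
proof -
  define S where "S = (\<Sum>j\<in>A. eta * (c j)^2)"
  have S0: "0 \<le> S" unfolding S_def using eta_pos by (simp add: sum_nonneg)
  have "(norm (Y A))^2 = Y A \<bullet> Y A" by (simp add: power2_norm_eq_inner)
  also have "\<dots> = (\<Sum>j\<in>A. (sqrt eta * c j) * (sqrt eta * (Y A \<bullet> phi j)))"
  proof -
    have "Y A \<bullet> Y A = (\<Sum>j\<in>A. (eta * c j) * (Y A \<bullet> z j))"
      by (subst (2) Y_def) (simp add: inner_sum_right)
    also have "\<dots> = (\<Sum>j\<in>A. (sqrt eta * c j) * (sqrt eta * (Y A \<bullet> phi j)))"
    proof (rule sum.cong)
      fix j assume "j \<in> A"
      have "Y A \<bullet> z j = Y A \<bullet> phi j" unfolding z_def by (rule perp_inner[OF Y_orth])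
      moreover have "sqrt eta * sqrt eta = eta" using eta_pos by simp
      ultimately show "(eta * c j) * (Y A \<bullet> z j) = (sqrt eta * c j) * (sqrt eta * (Y A \<bullet> phi j))"
        by (metis mult.assoc mult.left_commute)
    qed simp
    finally show ?thesis .
  qed
  finally have e: "(norm (Y A))^2 = (\<Sum>j\<in>A. (sqrt eta * c j) * (sqrt eta * (Y A \<bullet> phi j)))" .
  have "((norm (Y A))^2)^2 \<le> (\<Sum>j\<in>A. (sqrt eta * c j)^2) * (\<Sum>j\<in>A. (sqrt eta * (Y A \<bullet> phi j))^2)"
    unfolding e by (rule Cauchy_Schwarz_ineq_sum)
  also have "\<dots> = S * (eta * (\<Sum>j\<in>A. (Y A \<bullet> phi j)^2))"
    using eta_pos by (simp add: S_def power_mult_distrib sum_distrib_left)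
  also have "\<dots> \<le> S * (alpha * (norm (Y A))^2)"
    using perp_sub[OF Y_orth assms] S0 by (intro mult_left_mono) auto
  finally have "((norm (Y A))^2)^2 \<le> S * alpha * (norm (Y A))^2" by simp
  then show ?thesis
  proof (cases "norm (Y A) = 0")
    case True then show ?thesis using S0 alpha_pos by (simp add: S_def)
  next
    case False
    hence "0 < (norm (Y A))^2" by simp
    moreover assume "((norm (Y A))^2)^2 \<le> S * alpha * (norm (Y A))^2"
    ultimately have pos: "0 < (norm (Y A))^2" and
      h: "(norm (Y A))^2 * (norm (Y A))^2 \<le> (norm (Y A))^2 * (alpha * S)"
      by (simp_all add: power2_eq_square[of "(norm (Y A))^2"] mult_ac)
    from h show ?thesis unfolding mult_le_cancel_left_pos[OF pos] S_def .
  qed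
qed

lemma block: assumes A: "A \<subseteq> {1..n}" and B: "B \<subseteq> {1..n}" and Ae: "\<forall>j\<in>A. j \<le> e" and Be: "\<forall>i\<in>B. e \<le> i - 1"
  shows "(\<Sum>i\<in>B. eta * (phi i \<bullet> Y A)^2 / (g (i-1))^2) \<le> alpha^2 * (\<Sum>j\<in>A. lam j)"
proof -
  have ge: "0 < (g e)^2" using g_pos[of e] by simp
  have "(\<Sum>i\<in>B. eta * (phi i \<bullet> Y A)^2 / (g (i-1))^2) \<le> (\<Sum>i\<in>B. eta * (phi i \<bullet> Y A)^2 / (g e)^2)"
  proof (rule sum_mono)
    fix i assume "i \<in> B"
    hence "g e \<le> g (i - 1)" using Be g_mono by blast
    hence "(g e)^2 \<le> (g (i-1))^2" using g_pos by (intro power_mono) (auto intro: less_imp_le)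
    thus "eta * (phi i \<bullet> Y A)^2 / (g (i-1))^2 \<le> eta * (phi i \<bullet> Y A)^2 / (g e)^2"
      using ge eta_pos g_pos[of "i-1"] by (intro divide_left_mono) (auto intro: mult_pos_pos)
  qed
  also have "\<dots> = eta * (\<Sum>i\<in>B. (Y A \<bullet> phi i)^2) / (g e)^2"
    by (simp add: sum_divide_distrib sum_distrib_left inner_commute)
  also have "\<dots> \<le> alpha * (norm (Y A))^2 / (g e)^2"
    using perp_sub[OF Y_orth B] ge by (intro divide_right_mono) auto
  also have "\<dots> \<le> alpha * (alpha * (\<Sum>j\<in>A. eta * (c j)^2)) / (g e)^2"
    using Y_bound[OF A] ge alpha_pos by (intro divide_right_mono mult_left_mono) auto
  also have "\<dots> = alpha^2 * (\<Sum>j\<in>A. eta * (c j)^2 / (g e)^2)"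
    by (simp add: sum_divide_distrib[symmetric] power2_eq_square)
  also have "\<dots> \<le> alpha^2 * (\<Sum>j\<in>A. lam j)"
  proof (intro mult_left_mono sum_mono)
    fix j assume jA: "j \<in> A"
    hence j1: "j = Suc (j - 1)" using A by auto
    have "g j \<le> g e" using Ae jA g_mono by blast
    hence "(g j)^2 \<le> (g e)^2" using g_pos by (intro power_mono) (auto intro: less_imp_le)
    hence "eta * (c j)^2 / (g e)^2 \<le> eta * (c j)^2 / (g j)^2"
      using g_pos[of j] g_pos[of e] eta_pos by (intro divide_left_mono) (auto intro: mult_pos_pos)
    also have "\<dots> \<le> lam j" using lam_bound[of "j-1"] j1 by simp
    finally show "eta * (c j)^2 / (g e)^2 \<le> lam j" .
  qed simp
  finally show ?thesis .
qed

definition Ablk where "Ablk l k = {j\<in>{1..n}. j div 2^l = 2*k}"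
definition Bblk where "Bblk l k = {i\<in>{1..n}. i div 2^l = 2*k+1}"
definition X where "X l i = (if odd (i div 2^l) then phi i \<bullet> Y (Ablk l (i div 2^(Suc l))) else 0)"

lemma X_eq: assumes "i \<le> n"
  shows "(\<Sum>j\<in>{1..<i}. if lv l i j then eta * c j * (phi i \<bullet> z j) else 0) = X l i"
proof (cases "odd (i div 2^l)")
  case True
  define k where "k = i div 2^(Suc l)"
  have ik: "i div 2^l = 2*k+1" unfolding k_def div_Suc_pow using odd_two_times_div_two_succ[OF True] by simp
  have "(\<Sum>j\<in>{1..<i}. if lv l i j then eta * c j * (phi i \<bullet> z j) else 0)
      = (\<Sum>j\<in>{1..<i}. if j div 2^l = 2*k then eta * c j * (phi i \<bullet> z j) else 0)"
    by (rule sum.cong) (auto simp: lv_def ik)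
  also have "\<dots> = (\<Sum>j\<in>{j\<in>{1..<i}. j div 2^l = 2*k}. eta * c j * (phi i \<bullet> z j))"
    by (rule sum.inter_filter[symmetric]) simp
  also have "{j\<in>{1..<i}. j div 2^l = 2*k} = Ablk l k"
  proof -
    have jlt: "j < i" if "j div 2^l = 2*k" for j
    proof (rule ccontr)
      assume "\<not> j < i" hence "i div 2^l \<le> j div 2^l" by (simp add: div_le_mono)
      thus False using that ik by simp
    qed
    show ?thesis
    proof (intro set_eqI iffI)
      fix x assume "x \<in> Ablk l k"
      thus "x \<in> {j\<in>{1..<i}. j div 2^l = 2*k}" using jlt[of x] by (auto simp: Ablk_def)
    next
      fix x assume "x \<in> {j\<in>{1..<i}. j div 2^l = 2*k}"
      thus "x \<in> Ablk l k" using assms by (auto simp: Ablk_def)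
    qed
  qed
  also have "(\<Sum>j\<in>Ablk l k. eta * c j * (phi i \<bullet> z j)) = phi i \<bullet> Y (Ablk l k)"
    by (simp add: Y_def inner_sum_right)
  finally show ?thesis using True by (simp add: X_def k_def)
next
  case False
  have "\<not> lv l i j" for j using False by (auto simp: lv_def)
  then show ?thesis using False by (simp add: X_def)
qed

lemma level_bound: "(\<Sum>i=1..n. eta * (X l i)^2 / (g (i-1))^2) \<le> alpha^2 * ln (g n)"
proof -
  define H where "H i k = eta * (phi i \<bullet> Y (Ablk l k))^2 / (g (i-1))^2" for i k
  have step1: "(\<Sum>i=1..n. eta * (X l i)^2 / (g (i-1))^2)
      = (\<Sum>i=1..n. \<Sum>k\<in>{..n}. if i \<in> Bblk l k then H i k else 0)"
  proof (rule sum.cong[OF refl])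
    fix i assume i: "i \<in> {1..n}"
    define K where "K = i div 2^(Suc l)"
    have Kn: "K \<le> n" using i by (auto simp: K_def intro: le_trans[OF div_le_dividend])
    have cond: "(i \<in> Bblk l k) \<longleftrightarrow> (odd (i div 2^l) \<and> k = K)" for k
    proof -
      have gen: "\<And>x::nat. (x = 2*k+1) \<longleftrightarrow> (odd x \<and> k = x div 2)" by presburger
      have "(i div 2^l = 2*k+1) \<longleftrightarrow> (odd (i div 2^l) \<and> k = i div 2^l div 2)" by (rule gen)
      moreover have "K = i div 2^l div 2" unfolding K_def by (rule div_Suc_pow)
      ultimately show ?thesis using i by (simp add: Bblk_def)
    qed
    have "(\<Sum>k\<in>{..n}. if i \<in> Bblk l k then H i k else 0)
        = (\<Sum>k\<in>{..n}. if odd (i div 2^l) then (if k = K then H i k else 0) else 0)"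
      by (rule sum.cong[OF refl]) (simp add: cond)
    also have "\<dots> = (if odd (i div 2^l) then H i K else 0)"
      using Kn by (cases "odd (i div 2^l)") simp_all
    also have "\<dots> = eta * (X l i)^2 / (g (i-1))^2"
      by (simp add: X_def H_def K_def)
    finally show "eta * (X l i)^2 / (g (i-1))^2 = (\<Sum>k\<in>{..n}. if i \<in> Bblk l k then H i k else 0)" by simp
  qed
  also have "\<dots> = (\<Sum>k\<in>{..n}. \<Sum>i=1..n. if i \<in> Bblk l k then H i k else 0)"
    by (rule sum.swap)
  also have "\<dots> = (\<Sum>k\<in>{..n}. \<Sum>i\<in>Bblk l k. H i k)"
  proof (rule sum.cong[OF refl])
    fix k :: nat
    have "Bblk l k = {i\<in>{1..n}. i \<in> Bblk l k}" by (auto simp: Bblk_def)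
    hence "(\<Sum>i\<in>Bblk l k. H i k) = (\<Sum>i\<in>{i\<in>{1..n}. i \<in> Bblk l k}. H i k)" by simp
    also have "\<dots> = (\<Sum>i=1..n. if i \<in> Bblk l k then H i k else 0)"
      by (rule sum.inter_filter) simp
    finally show "(\<Sum>i=1..n. if i \<in> Bblk l k then H i k else 0) = (\<Sum>i\<in>Bblk l k. H i k)" by simp
  qed
  also have "\<dots> \<le> (\<Sum>k\<in>{..n}. alpha^2 * (\<Sum>j\<in>Ablk l k. lam j))"
  proof (rule sum_mono)
    fix k :: nat
    define e where "e = (2*k+1) * 2^l - 1"
    show "(\<Sum>i\<in>Bblk l k. H i k) \<le> alpha^2 * (\<Sum>j\<in>Ablk l k. lam j)"
      unfolding H_def
    proof (rule block)
      show "Ablk l k \<subseteq> {1..n}" by (auto simp: Ablk_def)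
      show "Bblk l k \<subseteq> {1..n}" by (auto simp: Bblk_def)
      show "\<forall>j\<in>Ablk l k. j \<le> e"
      proof
        fix j assume "j \<in> Ablk l k"
        hence jd: "j div 2^l = 2*k" by (simp add: Ablk_def)
        have "j < (j div 2^l + 1) * 2^l"
          using dividend_less_div_times[of "2^l" j] by (simp add: algebra_simps)
        thus "j \<le> e" unfolding e_def jd by simp
      qed
      show "\<forall>i\<in>Bblk l k. e \<le> i - 1"
      proof
        fix i assume "i \<in> Bblk l k"
        hence id: "i div 2^l = 2*k+1" by (simp add: Bblk_def)
        have "i div 2^l * 2^l \<le> i" by (rule div_times_less_eq_dividend)
        thus "e \<le> i - 1" unfolding e_def id by simp
      qed
    qed
  qed
  also have "\<dots> = alpha^2 * (\<Sum>k\<in>{..n}. \<Sum>j=1..n. if j div 2^l = 2*k then lam j else 0)"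
  proof -
    have "(\<Sum>j\<in>Ablk l k. lam j) = (\<Sum>j=1..n. if j div 2^l = 2*k then lam j else 0)" for k
      unfolding Ablk_def by (rule sum.inter_filter) simp
    thus ?thesis by (simp add: sum_distrib_left)
  qed
  also have "\<dots> = alpha^2 * (\<Sum>j=1..n. \<Sum>k\<in>{..n}. if j div 2^l = 2*k then lam j else 0)"
    by (subst sum.swap) simp
  also have "\<dots> \<le> alpha^2 * (\<Sum>j=1..n. lam j)"
  proof (intro mult_left_mono sum_mono)
    fix j :: nat
    have c2: "(j div 2^l = 2*k) \<longleftrightarrow> (even (j div 2^l) \<and> k = j div 2^l div 2)" for k :: nat
    proof -
      have gen: "\<And>x::nat. (x = 2*k) \<longleftrightarrow> (even x \<and> k = x div 2)" by presburger
      show ?thesis by (rule gen)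
    qed
    have "(\<Sum>k\<in>{..n}. if j div 2^l = 2*k then lam j else 0)
       = (\<Sum>k\<in>{..n}. if even (j div 2^l) then (if k = j div 2^l div 2 then lam j else 0) else 0)"
      by (rule sum.cong[OF refl]) (simp add: c2)
    also have "\<dots> \<le> lam j" using lam_nonneg[of j] by (cases "even (j div 2^l)") auto
    finally show "(\<Sum>k\<in>{..n}. if j div 2^l = 2*k then lam j else 0) \<le> lam j" .
  qed simp
  also have "\<dots> = alpha^2 * ln (g n)" unfolding lam_sum ..
  finally show ?thesis .
qed

lemma main_bound: assumes L: "n < 2^L"
  shows "eta * (\<Sum>i=1..n. (phi i \<bullet> perp_proj vs (v (i - 1) /\<^sub>R g (i - 1)))^2)
    \<le> real L * real L * alpha^2 * ln (g n)"
proof -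
  have t: "phi i \<bullet> perp_proj vs (v (i - 1) /\<^sub>R g (i - 1)) = (\<Sum>l<L. X l i) / g (i - 1)"
    if i: "i \<in> {1..n}" for i
  proof -
    have il: "i < 2^L" using i L by simp
    have "phi i \<bullet> perp_proj vs (v (i - 1) /\<^sub>R g (i - 1))
       = (\<Sum>j\<in>{1..<i}. eta * c j * (phi i \<bullet> z j)) / g (i - 1)" by (rule term_eq)
    also have "(\<Sum>j\<in>{1..<i}. eta * c j * (phi i \<bullet> z j))
       = (\<Sum>l<L. \<Sum>j\<in>{1..<i}. if lv l i j then eta * c j * (phi i \<bullet> z j) else 0)"
      by (rule level_split[OF il])
    also have "\<dots> = (\<Sum>l<L. X l i)"
      by (rule sum.cong[OF refl]) (use i X_eq in auto)
    finally show ?thesis .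
  qed
  have "eta * (\<Sum>i=1..n. (phi i \<bullet> perp_proj vs (v (i - 1) /\<^sub>R g (i - 1)))^2)
      = (\<Sum>i=1..n. eta * (\<Sum>l<L. X l i)^2 / (g (i-1))^2)"
    unfolding sum_distrib_left
  proof (rule sum.cong[OF refl])
    fix i assume "i \<in> {1..n}"
    from t[OF this] show "eta * (phi i \<bullet> perp_proj vs (v (i - 1) /\<^sub>R g (i - 1)))^2
        = eta * (\<Sum>l<L. X l i)^2 / (g (i-1))^2" by (simp add: power_divide)
  qed
  also have "\<dots> \<le> (\<Sum>i=1..n. eta * (real L * (\<Sum>l<L. (X l i)^2)) / (g (i-1))^2)"
  proof (rule sum_mono)
    fix i
    show "eta * (\<Sum>l<L. X l i)^2 / (g (i-1))^2 \<le> eta * (real L * (\<Sum>l<L. (X l i)^2)) / (g (i-1))^2"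
      using sum_cs_card[of "\<lambda>l. X l i" L] eta_pos g_pos[of "i-1"]
      by (intro divide_right_mono mult_left_mono) auto
  qed
  also have "\<dots> = real L * (\<Sum>l<L. \<Sum>i=1..n. eta * (X l i)^2 / (g (i-1))^2)"
    by (subst sum.swap) (simp add: sum_distrib_left sum_divide_distrib mult_ac)
  also have "\<dots> \<le> real L * (\<Sum>l<L. alpha^2 * ln (g n))"
    by (intro mult_left_mono sum_mono level_bound) simp
  also have "\<dots> = real L * real L * alpha^2 * ln (g n)" by simp
  finally show ?thesis .
qed

end

lemma ln2_ge_half: "1/2 \<le> ln (2::real)"
proof -
  have "ln (1/2::real) \<le> 1/2 - 1" by (rule ln_le_minus_one) simp
  thus ?thesis by (simp add: ln_div)
qed

lemma L_bound: assumes n2: "2 \<le> n" obtains L :: nat where "n < 2^L" "real L * real L \<le> 16 * (ln (real n))^2"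
proof -
  have ex: "n < 2^n" by (rule less_exp)
  define L where "L = (LEAST L. n < (2::nat)^L)"
  have nL: "n < 2^L" unfolding L_def by (rule LeastI[of "\<lambda>L. n < (2::nat)^L", OF ex])
  have L0: "L \<noteq> 0" using nL n2 by (cases L) auto
  have "\<not> n < 2^(L-1)" using not_less_Least[of "L-1" "\<lambda>L. n < (2::nat)^L"] L0 unfolding L_def by simp
  hence pw: "2^(L-1) \<le> n" by simp
  have "real (2^(L-1)) \<le> real n" using pw by linarith
  hence "ln (real (2^(L-1))) \<le> ln (real n)" using n2 by (subst ln_le_cancel_iff) auto
  hence a: "real (L-1) * ln 2 \<le> ln (real n)" by (simp add: ln_realpow)
  have ln2n: "ln 2 \<le> ln (real n)" using n2 by (subst ln_le_cancel_iff) auto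
  have h: "1/2 \<le> ln (2::real)" by (rule ln2_ge_half)
  have "real (L-1) * (1/2) \<le> real (L-1) * ln 2" using h by (intro mult_left_mono) auto
  hence b: "real (L-1) \<le> 2 * ln (real n)" using a by linarith
  have c: "1 \<le> 2 * ln (real n)" using ln2n h by linarith
  have "real L = real (L-1) + 1" using L0 by simp
  hence Lb: "real L \<le> 4 * ln (real n)" using b c by linarith
  have "real L * real L \<le> (4 * ln (real n)) * (4 * ln (real n))"
    using Lb by (intro mult_mono) auto
  hence "real L * real L \<le> 16 * (ln (real n))^2" by (simp add: power2_eq_square)
  thus ?thesis using nL that by blast
qed

theorem lemmaC5:
  fixes phi :: "nat \<Rightarrow> 'a::euclidean_space" and vs :: 'a
    and n :: nat and eta alpha beta :: real
  assumes eta: "0 < eta" "eta < 0.1"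
    and ab: "0 < alpha" "alpha \<le> beta"
    and vs_norm: "norm vs = 1"
    and vs_top: "eta * (\<Sum>i=1..n. (vs \<bullet> phi i)^2) = beta"
    and perp: "\<And>w. norm w \<le> 1 \<Longrightarrow> w \<bullet> vs = 0 \<Longrightarrow> eta * (\<Sum>i=1..n. (w \<bullet> phi i)^2) \<le> alpha"
  shows "eta * (\<Sum>i=1..n. (phi i \<bullet> perp_proj vs (oja_iter eta phi vs (i - 1) /\<^sub>R norm (oja_iter eta phi vs (i - 1))))^2)
         \<le> 100 * alpha^2 * (ln (real n))^2 * ln (norm (oja_iter eta phi vs n))"
proof -
  interpret O: oja_setup eta phi vs n alpha
    using eta ab vs_norm perp by unfold_locales auto
  have eqL: "eta * (\<Sum>i=1..n. (phi i \<bullet> perp_proj vs (oja_iter eta phi vs (i - 1) /\<^sub>R norm (oja_iter eta phi vs (i - 1))))^2)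
     = eta * (\<Sum>i=1..n. (phi i \<bullet> perp_proj vs (O.v (i - 1) /\<^sub>R O.g (i - 1)))^2)"
    by (simp add: O.v_def O.g_def)
  have eqR: "norm (oja_iter eta phi vs n) = O.g n" by (simp add: O.v_def O.g_def)
  have lng: "0 \<le> ln (O.g n)" using O.g_ge1[of n] by simp
  show ?thesis
  proof (cases "2 \<le> n")
    case True
    obtain L :: nat where L: "n < 2^L" "real L * real L \<le> 16 * (ln (real n))^2"
      using L_bound[OF True] by blast
    have "eta * (\<Sum>i=1..n. (phi i \<bullet> perp_proj vs (O.v (i - 1) /\<^sub>R O.g (i - 1)))^2)
        \<le> real L * real L * alpha^2 * ln (O.g n)" by (rule O.main_bound[OF L(1)])
    also have "\<dots> \<le> 100 * (ln (real n))^2 * alpha^2 * ln (O.g n)"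
    proof -
      have "real L * real L \<le> 100 * (ln (real n))^2"
        using L(2) zero_le_power2[of "ln (real n)"] by linarith
      hence "real L * real L * alpha^2 \<le> 100 * (ln (real n))^2 * alpha^2"
        by (intro mult_right_mono) auto
      thus ?thesis by (rule mult_right_mono[OF _ lng])
    qed
    finally show ?thesis unfolding eqL eqR by (simp add: mult_ac)
  next
    case False
    hence "n = 0 \<or> n = 1" by auto
    moreover have "phi 1 \<bullet> perp_proj vs (O.v 0 /\<^sub>R O.g 0) = 0"
      by (simp add: O.v_0 O.g_def perp_self vs_norm)
    ultimately have "eta * (\<Sum>i=1..n. (phi i \<bullet> perp_proj vs (O.v (i - 1) /\<^sub>R O.g (i - 1)))^2) = 0"
      by auto
    moreover have "0 \<le> 100 * alpha^2 * (ln (real n))^2 * ln (O.g n)" using lng by simp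
    ultimately show ?thesis unfolding eqL eqR by linarith
  qed
qed

end
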